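(* Let $\mathcal C$ and $\mathcal D$ be categories and $F\colon\mathcal C\to\mathcal D$ a functor. (1) If $\mathcal C$ has AP and $F$ is essentially wide and absorbing, then $\mathcal D$ has AP. (2) If $\mathcal C$ has CAP and $F$ is cofinal and absorbing, then $\mathcal D$ has CAP. (3) If $\mathcal C$ has WAP and $F$ is cofinal and weakly absorbing, then $\mathcal D$ has WAP. In particular, if $F$ is wide and star-surjective, then each of AP, CAP and WAP for $\mathcal C$ implies the same property for $\mathcal D$.
   Context: In a category, an object $A$ is an amalgamation base if for all morphisms $\alpha_1\colon A\to B$, $\alpha_2\colon A\to C$ there are an object $D$ and morphisms $\beta_1\colon B\to D$, $\beta_2\colon C\to D$ with $\beta_1\alpha_1=\beta_2\alpha_2$. AP: every object is an amalgamation base. CAP: every object $A_0$ has a morphism into an amalgamation base. WAP: every object $A_0$ has a morphism $i\colon A_0\to A$ that is amalgamable, i.e. for all $\alpha_1\colon A\to B$, $\alpha_2\colon A\to C$ there are $\beta_1\colon B\to D$, $\beta_2\colon C\to D$ with $\beta_1\alpha_1 i=\beta_2\alpha_2 i$. A functor $F\colon\mathcal C\to\mathcal D$ is: wide if every $\mathcal D$-object equals $F(X')$ for some $\mathcal C$-object $X'$; essentially wide if every $\mathcal D$-object is isomorphic to some $F(X')$; cofinal if for every $\mathcal D$-object $X$ there are a $\mathcal C$-object $X'$ and a $\mathcal D$-morphism $X\to F(X')$; star-surjective if for every $\mathcal C$-object $X'$ and $\mathcal D$-morphism $f\colon F(X')\to Y$ there is a $\mathcal C$-morphism $f'\colon X'\to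 Y'$ with $F(f')=f$; absorbing if for every $\mathcal C$-object $X'$ and $\mathcal D$-morphism $f\colon F(X')\to Y$ there are a $\mathcal C$-morphism $f'\colon X'\to Y'$ and a $\mathcal D$-morphism $g\colon Y\to F(Y')$ with $F(f')=g\circ f$; weakly absorbing if for every $\mathcal C$-object $X'$ there is a $\mathcal D$-morphism $e\colon F(X')\to X$ such that for every $\mathcal D$-morphism $f\colon X\to Y$ there are a $\mathcal C$-morphism $f'\colon X'\to Y'$ and a $\mathcal D$-morphism $g\colon Y\to F(Y')$ with $F(f')=g\circ f\circ e$. *)

theory Defs
  imports Main
begin

(* Categories presented by objects, arrows, domain, codomain, composition, identities.
   cmp C g f  denotes  g \<circ> f  (first f, then g). *)
record ('o,'m) category =
  ob  :: "'o set"
  ar  :: "'m set"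
  dom :: "'m \<Rightarrow> 'o"
  cod :: "'m \<Rightarrow> 'o"
  cmp :: "'m \<Rightarrow> 'm \<Rightarrow> 'm"
  idt :: "'o \<Rightarrow> 'm"

definition hom :: "('o,'m) category \<Rightarrow> 'o \<Rightarrow> 'o \<Rightarrow> 'm set" where
  "hom C X Y = {f \<in> ar C. dom C f = X \<and> cod C f = Y}"

definition is_category :: "('o,'m) category \<Rightarrow> bool" where
  "is_category C \<longleftrightarrow>
     (\<forall>f\<in>ar C. dom C f \<in> ob C \<and> cod C f \<in> ob C) \<and>
     (\<forall>X\<in>ob C. idt C X \<in> hom C X X) \<and>
     (\<forall>f\<in>ar C. \<forall>g\<in>ar C. cod C f = dom C g \<longrightarrow> cmp C g f \<in> hom C (dom C f) (cod C g)) \<and>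
     (\<forall>f\<in>ar C. cmp C f (idt C (dom C f)) = f \<and> cmp C (idt C (cod C f)) f = f) \<and>
     (\<forall>f\<in>ar C. \<forall>g\<in>ar C. \<forall>h\<in>ar C. cod C f = dom C g \<longrightarrow> cod C g = dom C h \<longrightarrow>
         cmp C h (cmp C g f) = cmp C (cmp C h g) f)"

definition is_functor ::
  "('a,'b) category \<Rightarrow> ('c,'d) category \<Rightarrow> ('a \<Rightarrow> 'c) \<Rightarrow> ('b \<Rightarrow> 'd) \<Rightarrow> bool" where
  "is_functor C D Fo Fm \<longleftrightarrow> is_category C \<and> is_category D \<and>
     (\<forall>X\<in>ob C. Fo X \<in> ob D) \<and>
     (\<forall>f\<in>ar C. Fm f \<in> hom D (Fo (dom C f)) (Fo (cod C f))) \<and>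
     (\<forall>X\<in>ob C. Fm (idt C X) = idt D (Fo X)) \<and>
     (\<forall>f\<in>ar C. \<forall>g\<in>ar C. cod C f = dom C g \<longrightarrow> Fm (cmp C g f) = cmp D (Fm g) (Fm f))"

definition isomorphic :: "('o,'m) category \<Rightarrow> 'o \<Rightarrow> 'o \<Rightarrow> bool" where
  "isomorphic C X Y \<longleftrightarrow> (\<exists>f g. f \<in> hom C X Y \<and> g \<in> hom C Y X \<and>
       cmp C g f = idt C X \<and> cmp C f g = idt C Y)"

definition amalgamation_base :: "('o,'m) category \<Rightarrow> 'o \<Rightarrow> bool" where
  "amalgamation_base C A \<longleftrightarrow> A \<in> ob C \<and>
     (\<forall>B B' a1 a2. a1 \<in> hom C A B \<longrightarrow> a2 \<in> hom C A B' \<longrightarrow>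
        (\<exists>E b1 b2. b1 \<in> hom C B E \<and> b2 \<in> hom C B' E \<and> cmp C b1 a1 = cmp C b2 a2))"

definition AP :: "('o,'m) category \<Rightarrow> bool" where
  "AP C \<longleftrightarrow> (\<forall>A\<in>ob C. amalgamation_base C A)"

definition CAP :: "('o,'m) category \<Rightarrow> bool" where
  "CAP C \<longleftrightarrow> (\<forall>A0\<in>ob C. \<exists>A f. f \<in> hom C A0 A \<and> amalgamation_base C A)"

definition amalgamable :: "('o,'m) category \<Rightarrow> 'm \<Rightarrow> bool" where
  "amalgamable C i \<longleftrightarrow> i \<in> ar C \<and>
     (\<forall>B B' a1 a2. a1 \<in> hom C (cod C i) B \<longrightarrow> a2 \<in> hom C (cod C i) B' \<longrightarrow>
        (\<exists>E b1 b2. b1 \<in> hom C B E \<and> b2 \<in> hom C B' E \<and>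
           cmp C b1 (cmp C a1 i) = cmp C b2 (cmp C a2 i)))"

definition WAP :: "('o,'m) category \<Rightarrow> bool" where
  "WAP C \<longleftrightarrow> (\<forall>A0\<in>ob C. \<exists>A i. i \<in> hom C A0 A \<and> amalgamable C i)"

definition wide where
  "wide C D Fo \<longleftrightarrow> (\<forall>X\<in>ob D. \<exists>X'\<in>ob C. X = Fo X')"

definition essentially_wide where
  "essentially_wide C D Fo \<longleftrightarrow> (\<forall>X\<in>ob D. \<exists>X'\<in>ob C. isomorphic D X (Fo X'))"

definition cofinal where
  "cofinal C D Fo \<longleftrightarrow> (\<forall>X\<in>ob D. \<exists>X'\<in>ob C. \<exists>f. f \<in> hom D X (Fo X'))"

definition star_surjective where
  "star_surjective C D Fo Fm \<longleftrightarrow> (\<forall>X'\<in>ob C. \<forall>Y f. f \<in> hom D (Fo X') Y \<longrightarrow>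
      (\<exists>Y' f'. f' \<in> hom C X' Y' \<and> Fm f' = f))"

definition absorbing where
  "absorbing C D Fo Fm \<longleftrightarrow> (\<forall>X'\<in>ob C. \<forall>Y f. f \<in> hom D (Fo X') Y \<longrightarrow>
      (\<exists>Y' f' g. f' \<in> hom C X' Y' \<and> g \<in> hom D Y (Fo Y') \<and> Fm f' = cmp D g f))"

definition weakly_absorbing where
  "weakly_absorbing C D Fo Fm \<longleftrightarrow> (\<forall>X'\<in>ob C. \<exists>X e. e \<in> hom D (Fo X') X \<and>
      (\<forall>Y f. f \<in> hom D X Y \<longrightarrow>
         (\<exists>Y' f' g. f' \<in> hom C X' Y' \<and> g \<in> hom D Y (Fo Y') \<and> Fm f' = cmp D g (cmp D f e))))"

end

theory Submission
  imports Defs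
begin

lemma cat_facts:
  assumes "is_category C"
  shows cat_cmp_ar: "\<And>f g. f \<in> ar C \<Longrightarrow> g \<in> ar C \<Longrightarrow> cod C f = dom C g \<Longrightarrow> cmp C g f \<in> ar C"
    and cat_cmp_dom: "\<And>f g. f \<in> ar C \<Longrightarrow> g \<in> ar C \<Longrightarrow> cod C f = dom C g \<Longrightarrow> dom C (cmp C g f) = dom C f"
    and cat_cmp_cod: "\<And>f g. f \<in> ar C \<Longrightarrow> g \<in> ar C \<Longrightarrow> cod C f = dom C g \<Longrightarrow> cod C (cmp C g f) = cod C g"
    and cat_assoc: "\<And>f g h. f \<in> ar C \<Longrightarrow> g \<in> ar C \<Longrightarrow> h \<in> ar C \<Longrightarrow> cod C f = dom C g \<Longrightarrow> cod C g = dom C h \<Longrightarrow>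
         cmp C (cmp C h g) f = cmp C h (cmp C g f)"
    and cat_id_ar: "\<And>X. X \<in> ob C \<Longrightarrow> idt C X \<in> ar C"
    and cat_id_dom: "\<And>X. X \<in> ob C \<Longrightarrow> dom C (idt C X) = X"
    and cat_id_cod: "\<And>X. X \<in> ob C \<Longrightarrow> cod C (idt C X) = X"
    and cat_idr: "\<And>f X. f \<in> ar C \<Longrightarrow> dom C f = X \<Longrightarrow> cmp C f (idt C X) = f"
    and cat_idl: "\<And>f X. f \<in> ar C \<Longrightarrow> cod C f = X \<Longrightarrow> cmp C (idt C X) f = f"
    and cat_dom_ob: "\<And>f. f \<in> ar C \<Longrightarrow> dom C f \<in> ob C"
    and cat_cod_ob: "\<And>f. f \<in> ar C \<Longrightarrow> cod C f \<in> ob C"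
  using assms unfolding is_category_def hom_def by auto

lemma fun_facts:
  assumes "is_functor C D Fo Fm"
  shows fun_ar: "\<And>f. f \<in> ar C \<Longrightarrow> Fm f \<in> ar D"
    and fun_dom: "\<And>f. f \<in> ar C \<Longrightarrow> dom D (Fm f) = Fo (dom C f)"
    and fun_cod: "\<And>f. f \<in> ar C \<Longrightarrow> cod D (Fm f) = Fo (cod C f)"
    and fun_cmp: "\<And>f g. f \<in> ar C \<Longrightarrow> g \<in> ar C \<Longrightarrow> cod C f = dom C g \<Longrightarrow> Fm (cmp C g f) = cmp D (Fm g) (Fm f)"
    and fun_ob: "\<And>X. X \<in> ob C \<Longrightarrow> Fo X \<in> ob D"
    and fun_cC: "is_category C" and fun_cD: "is_category D"
  using assms unfolding is_functor_def hom_def by auto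

lemma part1:
  assumes F: "is_functor C D Fo Fm" and ap: "AP C" and ew: "essentially_wide C D Fo"
    and ab: "absorbing C D Fo Fm"
  shows "AP D"
  unfolding AP_def amalgamation_base_def
proof (intro ballI conjI allI impI)
  have cC: "is_category C" and cD: "is_category D" using F by (auto simp: is_functor_def)
  note S = cat_facts[OF cC] cat_facts[OF cD] fun_facts[OF F]
  fix X B B' a1 a2 assume X: "X \<in> ob D" and a1: "a1 \<in> hom D X B" and a2: "a2 \<in> hom D X B'"
  obtain X' u v where X': "X' \<in> ob C" and u: "u \<in> hom D X (Fo X')" and v: "v \<in> hom D (Fo X') X"
    and vu: "cmp D v u = idt D X"
    using ew X unfolding essentially_wide_def isomorphic_def by blast
  have a1v: "cmp D a1 v \<in> hom D (Fo X') B" using a1 v S unfolding hom_def by auto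
  have a2v: "cmp D a2 v \<in> hom D (Fo X') B'" using a2 v S unfolding hom_def by auto
  obtain Y1 f1 g1 where f1: "f1 \<in> hom C X' Y1" and g1: "g1 \<in> hom D B (Fo Y1)"
    and e1: "Fm f1 = cmp D g1 (cmp D a1 v)" using ab X' a1v unfolding absorbing_def by blast
  obtain Y2 f2 g2 where f2: "f2 \<in> hom C X' Y2" and g2: "g2 \<in> hom D B' (Fo Y2)"
    and e2: "Fm f2 = cmp D g2 (cmp D a2 v)" using ab X' a2v unfolding absorbing_def by blast
  obtain E b1 b2 where b1: "b1 \<in> hom C Y1 E" and b2: "b2 \<in> hom C Y2 E"
    and eb: "cmp C b1 f1 = cmp C b2 f2"
    using ap X' f1 f2 unfolding AP_def amalgamation_base_def by blast
  have k1: "cmp D (cmp D (Fm b1) g1) a1 = cmp D (Fm (cmp C b1 f1)) u"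
  proof -
    have "cmp D (cmp D (Fm b1) g1) a1 = cmp D (cmp D (Fm b1) g1) (cmp D a1 (cmp D v u))"
      using vu a1 S unfolding hom_def by auto
    also have "\<dots> = cmp D (Fm (cmp C b1 f1)) u"
      using a1 b1 f1 g1 u v e1 S unfolding hom_def by auto
    finally show ?thesis .
  qed
  have k2: "cmp D (cmp D (Fm b2) g2) a2 = cmp D (Fm (cmp C b2 f2)) u"
  proof -
    have "cmp D (cmp D (Fm b2) g2) a2 = cmp D (cmp D (Fm b2) g2) (cmp D a2 (cmp D v u))"
      using vu a2 S unfolding hom_def by auto
    also have "\<dots> = cmp D (Fm (cmp C b2 f2)) u"
      using a2 b2 f2 g2 u v e2 S unfolding hom_def by auto
    finally show ?thesis .
  qed
  show "\<exists>E b1 b2. b1 \<in> hom D B E \<and> b2 \<in> hom D B' E \<and> cmp D b1 a1 = cmp D b2 a2"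
    apply (rule exI[of _ "Fo E"], rule exI[of _ "cmp D (Fm b1) g1"], rule exI[of _ "cmp D (Fm b2) g2"])
    using k1 k2 eb b1 b2 g1 g2 S unfolding hom_def by auto
qed

lemma part2:
  assumes F: "is_functor C D Fo Fm" and cap: "CAP C" and cf: "cofinal C D Fo"
    and ab: "absorbing C D Fo Fm"
  shows "CAP D"
  unfolding CAP_def
proof (intro ballI)
  have cC: "is_category C" and cD: "is_category D" using F by (auto simp: is_functor_def)
  note S = cat_facts[OF cC] cat_facts[OF cD] fun_facts[OF F]
  fix X assume X: "X \<in> ob D"
  obtain X' f where X': "X' \<in> ob C" and f: "f \<in> hom D X (Fo X')" using cf X unfolding cofinal_def by blast
  obtain A h where h: "h \<in> hom C X' A" and A: "amalgamation_base C A"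
    using cap X' unfolding CAP_def by blast
  have AB: "amalgamation_base D (Fo A)"
    unfolding amalgamation_base_def
  proof (intro conjI allI impI)
    show "Fo A \<in> ob D" using A S unfolding amalgamation_base_def by auto
    fix B B' a1 a2 assume a1: "a1 \<in> hom D (Fo A) B" and a2: "a2 \<in> hom D (Fo A) B'"
    have AC: "A \<in> ob C" using A unfolding amalgamation_base_def by auto
    obtain Y1 f1 g1 where f1: "f1 \<in> hom C A Y1" and g1: "g1 \<in> hom D B (Fo Y1)"
      and e1: "Fm f1 = cmp D g1 a1" using ab AC a1 unfolding absorbing_def by blast
    obtain Y2 f2 g2 where f2: "f2 \<in> hom C A Y2" and g2: "g2 \<in> hom D B' (Fo Y2)"
      and e2: "Fm f2 = cmp D g2 a2" using ab AC a2 unfolding absorbing_def by blast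
    obtain E b1 b2 where b1: "b1 \<in> hom C Y1 E" and b2: "b2 \<in> hom C Y2 E"
      and eb: "cmp C b1 f1 = cmp C b2 f2"
      using A f1 f2 unfolding amalgamation_base_def by blast
    have k1: "cmp D (cmp D (Fm b1) g1) a1 = Fm (cmp C b1 f1)"
      using a1 b1 f1 g1 e1 S unfolding hom_def by auto
    have k2: "cmp D (cmp D (Fm b2) g2) a2 = Fm (cmp C b2 f2)"
      using a2 b2 f2 g2 e2 S unfolding hom_def by auto
    show "\<exists>E b1 b2. b1 \<in> hom D B E \<and> b2 \<in> hom D B' E \<and> cmp D b1 a1 = cmp D b2 a2"
      apply (rule exI[of _ "Fo E"], rule exI[of _ "cmp D (Fm b1) g1"], rule exI[of _ "cmp D (Fm b2) g2"])
      using k1 k2 eb b1 b2 g1 g2 S unfolding hom_def by auto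
  qed
  have "cmp D (Fm h) f \<in> hom D X (Fo A)" using f h S unfolding hom_def by auto
  then show "\<exists>A f. f \<in> hom D X A \<and> amalgamation_base D A" using AB by blast
qed

lemma part3:
  assumes F: "is_functor C D Fo Fm" and wap: "WAP C" and cf: "cofinal C D Fo"
    and ab: "weakly_absorbing C D Fo Fm"
  shows "WAP D"
  unfolding WAP_def
proof (intro ballI)
  have cC: "is_category C" and cD: "is_category D" using F by (auto simp: is_functor_def)
  note S = cat_facts[OF cC] cat_facts[OF cD] fun_facts[OF F]
  fix X assume X: "X \<in> ob D"
  obtain X' f where X': "X' \<in> ob C" and f: "f \<in> hom D X (Fo X')" using cf X unfolding cofinal_def by blast
  obtain A i where i: "i \<in> hom C X' A" and am: "amalgamable C i"
    using wap X' unfolding WAP_def by blast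
  have AC: "A \<in> ob C" using i S unfolding hom_def by auto
  obtain Z e where e: "e \<in> hom D (Fo A) Z" and eP: "\<And>Y f. f \<in> hom D Z Y \<Longrightarrow>
         (\<exists>Y' f' g. f' \<in> hom C A Y' \<and> g \<in> hom D Y (Fo Y') \<and> Fm f' = cmp D g (cmp D f e))"
    using ab AC unfolding weakly_absorbing_def by blast
  define j where "j = cmp D e (cmp D (Fm i) f)"
  have j: "j \<in> hom D X Z" using e i f S unfolding hom_def j_def by auto
  have "amalgamable D j"
    unfolding amalgamable_def
  proof (intro conjI allI impI)
    show "j \<in> ar D" using j unfolding hom_def by auto
    fix B B' a1 a2 assume a1: "a1 \<in> hom D (cod D j) B" and a2: "a2 \<in> hom D (cod D j) B'"
    have cj: "cod D j = Z" using j unfolding hom_def by auto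
    obtain Y1 f1 g1 where f1: "f1 \<in> hom C A Y1" and g1: "g1 \<in> hom D B (Fo Y1)"
      and e1: "Fm f1 = cmp D g1 (cmp D a1 e)" using eP a1 cj by blast
    obtain Y2 f2 g2 where f2: "f2 \<in> hom C A Y2" and g2: "g2 \<in> hom D B' (Fo Y2)"
      and e2: "Fm f2 = cmp D g2 (cmp D a2 e)" using eP a2 cj by blast
    have ci: "cod C i = A" using i unfolding hom_def by auto
    obtain E b1 b2 where b1: "b1 \<in> hom C Y1 E" and b2: "b2 \<in> hom C Y2 E"
      and eb: "cmp C b1 (cmp C f1 i) = cmp C b2 (cmp C f2 i)"
      using am f1 f2 ci unfolding amalgamable_def by blast
    have k1: "cmp D (cmp D (Fm b1) g1) (cmp D a1 j) = cmp D (Fm (cmp C b1 (cmp C f1 i))) f"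
      using a1 b1 f1 g1 e1 e i f cj S unfolding hom_def j_def by auto
    have k2: "cmp D (cmp D (Fm b2) g2) (cmp D a2 j) = cmp D (Fm (cmp C b2 (cmp C f2 i))) f"
      using a2 b2 f2 g2 e2 e i f cj S unfolding hom_def j_def by auto
    show "\<exists>E b1 b2. b1 \<in> hom D B E \<and> b2 \<in> hom D B' E \<and>
           cmp D b1 (cmp D a1 j) = cmp D b2 (cmp D a2 j)"
      apply (rule exI[of _ "Fo E"], rule exI[of _ "cmp D (Fm b1) g1"], rule exI[of _ "cmp D (Fm b2) g2"])
      using k1 k2 eb b1 b2 g1 g2 S unfolding hom_def by auto
  qed
  then show "\<exists>A i. i \<in> hom D X A \<and> amalgamable D i" using j by blast
qed

lemma part4:
  assumes F: "is_functor C D Fo Fm" and w: "wide C D Fo" and ss: "star_surjective C D Fo Fm"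
  shows "essentially_wide C D Fo" "cofinal C D Fo" "absorbing C D Fo Fm" "weakly_absorbing C D Fo Fm"
proof -
  have cC: "is_category C" and cD: "is_category D" using F by (auto simp: is_functor_def)
  note S = cat_facts[OF cC] cat_facts[OF cD] fun_facts[OF F]
  show "essentially_wide C D Fo" unfolding essentially_wide_def isomorphic_def
  proof
    fix X assume X: "X \<in> ob D"
    then obtain X' where "X' \<in> ob C" "X = Fo X'" using w unfolding wide_def by blast
    then show "\<exists>X'\<in>ob C. \<exists>f g. f \<in> hom D X (Fo X') \<and> g \<in> hom D (Fo X') X \<and>
          cmp D g f = idt D X \<and> cmp D f g = idt D (Fo X')"
      using X S unfolding hom_def by (intro bexI[of _ X'] exI[of _ "idt D X"]) auto
  qed
  show "cofinal C D Fo" unfolding cofinal_def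
  proof
    fix X assume X: "X \<in> ob D"
    then obtain X' where "X' \<in> ob C" "X = Fo X'" using w unfolding wide_def by blast
    then show "\<exists>X'\<in>ob C. \<exists>f. f \<in> hom D X (Fo X')"
      using X S unfolding hom_def by (intro bexI[of _ X'] exI[of _ "idt D X"]) auto
  qed
  show "absorbing C D Fo Fm" unfolding absorbing_def
  proof (intro ballI allI impI)
    fix X' Y f assume X': "X' \<in> ob C" and f: "f \<in> hom D (Fo X') Y"
    then obtain Y' f' where f': "f' \<in> hom C X' Y'" "Fm f' = f" using ss unfolding star_surjective_def by blast
    then show "\<exists>Y' f' g. f' \<in> hom C X' Y' \<and> g \<in> hom D Y (Fo Y') \<and> Fm f' = cmp D g f"
      using f S unfolding hom_def by (intro exI[of _ Y'] exI[of _ f'] exI[of _ "idt D Y"]) auto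
  qed
  show "weakly_absorbing C D Fo Fm" unfolding weakly_absorbing_def
  proof (intro ballI)
    fix X' assume X': "X' \<in> ob C"
    have e: "idt D (Fo X') \<in> hom D (Fo X') (Fo X')" using X' S unfolding hom_def by auto
    have "\<forall>Y f. f \<in> hom D (Fo X') Y \<longrightarrow>
         (\<exists>Y' f' g. f' \<in> hom C X' Y' \<and> g \<in> hom D Y (Fo Y') \<and> Fm f' = cmp D g (cmp D f (idt D (Fo X'))))"
    proof (intro allI impI)
      fix Y f assume f: "f \<in> hom D (Fo X') Y"
      then obtain Y' f' where f': "f' \<in> hom C X' Y'" "Fm f' = f" using X' ss unfolding star_surjective_def by blast
      then show "\<exists>Y' f' g. f' \<in> hom C X' Y' \<and> g \<in> hom D Y (Fo Y') \<and> Fm f' = cmp D g (cmp D f (idt D (Fo X')))"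
        using f S unfolding hom_def by (intro exI[of _ Y'] exI[of _ f'] exI[of _ "idt D Y"]) auto
    qed
    then show "\<exists>X e. e \<in> hom D (Fo X') X \<and> (\<forall>Y f. f \<in> hom D X Y \<longrightarrow>
         (\<exists>Y' f' g. f' \<in> hom C X' Y' \<and> g \<in> hom D Y (Fo Y') \<and> Fm f' = cmp D g (cmp D f e)))"
      using e by blast
  qed
qed

theorem proposition3p7:
  fixes C :: "('a,'b) category" and D :: "('c,'d) category"
    and Fo :: "'a \<Rightarrow> 'c" and Fm :: "'b \<Rightarrow> 'd"
  assumes "is_functor C D Fo Fm"
  shows "(AP C \<and> essentially_wide C D Fo \<and> absorbing C D Fo Fm \<longrightarrow> AP D)
    \<and> (CAP C \<and> cofinal C D Fo \<and> absorbing C D Fo Fm \<longrightarrow> CAP D)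
    \<and> (WAP C \<and> cofinal C D Fo \<and> weakly_absorbing C D Fo Fm \<longrightarrow> WAP D)
    \<and> (wide C D Fo \<and> star_surjective C D Fo Fm \<longrightarrow>
         (AP C \<longrightarrow> AP D) \<and> (CAP C \<longrightarrow> CAP D) \<and> (WAP C \<longrightarrow> WAP D))"
  using part1[OF assms] part2[OF assms] part3[OF assms] part4[OF assms] by blast

end
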